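(* Let $f:\mathbb{R}^n\times\mathbb{R}^m\to\mathbb{R}^n$ be a polynomial map and let $\boldsymbol\psi:\mathbb{R}^n\to\mathbb{R}^m$ be a function whose graph satisfies \[ \{(x,\boldsymbol\psi(x)) : x\in\mathbb{R}^n\} = \{(x,u) \mid \exists\,\lambda\in\mathbb{R}^{n_\lambda}\ \text{s.t.}\ g(x,u,\lambda)\ge 0,\ h(x,u,\lambda)=0\} \] for vector-valued polynomial maps $g,h$. Write $\xi=(x,u,\lambda,x^+,u^+,\lambda^+)$. Suppose there exist a polynomial $V(x,u,\lambda)$, (vectors of) sum-of-squares polynomials $\sigma_0(\xi),\sigma_1(\xi),\sigma_2(\xi),\bar\sigma_0(x,u,\lambda),\bar\sigma_1(x,u,\lambda)$ and (vectors of) arbitrary polynomials $p_1(\xi),p_2(\xi),p_3(\xi),\bar p_1(x,u,\lambda)$ of compatible dimensions such that the polynomial identities \[ V(x,u,\lambda) - V(x^+,u^+,\lambda^+) - \|x\|_2^2 = \sigma_0(\xi) + \sigma_1(\xi)^\top g(x,u,\lambda) + \sigma_2(\xi)^\top g(x^+,u^+,\lambda^+) + p_1(\xi)^\top h(x,u,\lambda) + p_2(\xi)^\top h(x^+,u^+,\lambda^+) + p_3(\xi)^\top(x^+ - f(x,u)), \] \[ V(x,u,\lambda) = \bar\sigma_0(x,u,\lambda) + \bar\sigma_1(x,u,\lambda)^\top g(x,u,\lambda) + \bar p_1(x,u,\lambda)^\top h(x,u,\lambda) \] hold. Then: (1) the closed-loop system $x_{k+1}=f(x_k,\boldsymbol\psi(x_k))$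 is globally attractive, i.e., $x_k\to0$ for all initial conditions; (2) if in addition the function $x\mapsto\inf\{\|u\|_2+\|\lambda\|_2\mid g(x,u,\lambda)\ge0,\ h(x,u,\lambda)=0\}$ is bounded on some neighborhood of the origin, or $V$ does not depend on $(u,\lambda)$, then the closed-loop system is globally asymptotically stable.
   Context: A polynomial is sum-of-squares (SOS) if it is a finite sum of squares of polynomials; a vector of SOS polynomials has SOS entries. The closed-loop system is globally asymptotically stable if (i) for all initial conditions $x_0$, $\lim_{k\to\infty}x_k=0$, and (ii) for every $\epsilon>0$ there exists $\delta>0$ such that $\|x_0\|_2\le\delta$ implies $\|x_k\|_2\le\epsilon$ for all $k$. *)

theory Defs
  imports "HOL-Analysis.Analysis"
begin

inductive poly_fun :: "('a::euclidean_space \<Rightarrow> real) \<Rightarrow> bool" where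
  const: "poly_fun (\<lambda>x. c)"
| coord: "b \<in> Basis \<Longrightarrow> poly_fun (\<lambda>x. x \<bullet> b)"
| add: "poly_fun p \<Longrightarrow> poly_fun q \<Longrightarrow> poly_fun (\<lambda>x. p x + q x)"
| mult: "poly_fun p \<Longrightarrow> poly_fun q \<Longrightarrow> poly_fun (\<lambda>x. p x * q x)"

definition sos_fun :: "('a::euclidean_space \<Rightarrow> real) \<Rightarrow> bool" where
  "sos_fun p \<longleftrightarrow> (\<exists>qs. (\<forall>q\<in>set qs. poly_fun q) \<and> p = (\<lambda>x. \<Sum>q\<leftarrow>qs. (q x)\<^sup>2))"

definition poly_map :: "('a::euclidean_space \<Rightarrow> real ^ 'k) \<Rightarrow> bool" where
  "poly_map F \<longleftrightarrow> (\<forall>i. poly_fun (\<lambda>x. F x $ i))"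

definition sos_map :: "('a::euclidean_space \<Rightarrow> real ^ 'k) \<Rightarrow> bool" where
  "sos_map F \<longleftrightarrow> (\<forall>i. sos_fun (\<lambda>x. F x $ i))"

definition cl_traj :: "((real^'n) \<times> (real^'m) \<Rightarrow> real^'n) \<Rightarrow> (real^'n \<Rightarrow> real^'m)
    \<Rightarrow> real^'n \<Rightarrow> nat \<Rightarrow> real^'n" where
  "cl_traj f psi x0 k = ((\<lambda>x. f (x, psi x)) ^^ k) x0"

definition GAS :: "(real^'n \<Rightarrow> nat \<Rightarrow> real^'n) \<Rightarrow> bool" where
  "GAS traj \<longleftrightarrow>
     (\<forall>x0. traj x0 \<longlonglongrightarrow> 0) \<and>
     (\<forall>\<epsilon>>0. \<exists>\<delta>>0. \<forall>x0. norm x0 \<le> \<delta> \<longrightarrow> (\<forall>k. norm (traj x0 k) \<le> \<epsilon>))"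

end

theory Submission
  imports Defs
begin


lemma poly_fun_cont: "poly_fun p \<Longrightarrow> continuous_on UNIV p"
  by (induction rule: poly_fun.induct) (auto intro!: continuous_intros)

lemma poly_map_cont:
  assumes "poly_map F" shows "continuous_on UNIV F"
proof -
  have "continuous_on UNIV (\<lambda>x. \<chi> i. F x $ i)"
    using assms unfolding poly_map_def by (intro continuous_on_vec_lambda poly_fun_cont) auto
  then show ?thesis by simp
qed

lemma sos_fun_nonneg: "sos_fun p \<Longrightarrow> p x \<ge> 0"
  unfolding sos_fun_def by (auto intro!: sum_list_nonneg)

lemma sos_map_nonneg: "sos_map F \<Longrightarrow> F x $ i \<ge> 0"
  unfolding sos_map_def using sos_fun_nonneg by blast

lemma inner_nonneg_vec:
  fixes a b :: "real^'k"
  assumes "\<And>i. a $ i \<ge> 0" "\<And>i. b $ i \<ge> 0"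
  shows "a \<bullet> b \<ge> 0"
  unfolding inner_vec_def using assms by (auto intro!: sum_nonneg)

lemma chain_bound:
  fixes W :: "nat \<Rightarrow> real" and xs :: "nat \<Rightarrow> 'a::real_normed_vector"
  assumes "\<And>k. W k - W (Suc k) \<ge> (norm (xs k))\<^sup>2"
  shows "W 0 - W K \<ge> (\<Sum>k<K. (norm (xs k))\<^sup>2)"
proof -
  have "(\<Sum>k<K. (norm (xs k))\<^sup>2) \<le> (\<Sum>k<K. W k - W (Suc k))"
    by (rule sum_mono) (use assms in auto)
  also have "\<dots> = W 0 - W K" by (rule sum_lessThan_telescope')
  finally show ?thesis .
qed

lemma chain_bound_single:
  fixes W :: "nat \<Rightarrow> real" and xs :: "nat \<Rightarrow> 'a::real_normed_vector"
  assumes "\<And>k. W k - W (Suc k) \<ge> (norm (xs k))\<^sup>2" "j < K"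
  shows "W 0 - W K \<ge> (norm (xs j))\<^sup>2"
proof -
  have "(norm (xs j))\<^sup>2 \<le> (\<Sum>k<K. (norm (xs k))\<^sup>2)"
    using assms(2) by (intro member_le_sum) auto
  moreover have "W 0 - W K \<ge> (\<Sum>k<K. (norm (xs k))\<^sup>2)" by (rule chain_bound) (rule assms(1))
  ultimately show ?thesis by linarith
qed


theorem theorem2:
  fixes f :: "(real^'n) \<times> (real^'m) \<Rightarrow> (real^'n)"
    and psi :: "(real^'n) \<Rightarrow> (real^'m)"
    and g :: "(real^'n) \<times> (real^'m) \<times> (real^'l) \<Rightarrow> (real^'g)"
    and h :: "(real^'n) \<times> (real^'m) \<times> (real^'l) \<Rightarrow> (real^'h)"
    and V :: "(real^'n) \<times> (real^'m) \<times> (real^'l) \<Rightarrow> real"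
    and \<sigma>0 :: "((real^'n) \<times> (real^'m) \<times> (real^'l)) \<times> ((real^'n) \<times> (real^'m) \<times> (real^'l)) \<Rightarrow> real"
    and \<sigma>1 \<sigma>2 :: "((real^'n) \<times> (real^'m) \<times> (real^'l)) \<times> ((real^'n) \<times> (real^'m) \<times> (real^'l)) \<Rightarrow> (real^'g)"
    and p1 p2 :: "((real^'n) \<times> (real^'m) \<times> (real^'l)) \<times> ((real^'n) \<times> (real^'m) \<times> (real^'l)) \<Rightarrow> (real^'h)"
    and p3 :: "((real^'n) \<times> (real^'m) \<times> (real^'l)) \<times> ((real^'n) \<times> (real^'m) \<times> (real^'l)) \<Rightarrow> (real^'n)"
    and s0 :: "(real^'n) \<times> (real^'m) \<times> (real^'l) \<Rightarrow> real"
    and s1 :: "(real^'n) \<times> (real^'m) \<times> (real^'l) \<Rightarrow> (real^'g)"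
    and q1 :: "(real^'n) \<times> (real^'m) \<times> (real^'l) \<Rightarrow> (real^'h)"
  assumes f_poly: "poly_map f"
    and g_poly: "poly_map g"
    and h_poly: "poly_map h"
    and graph: "{(x, psi x) | x. True} =
      {(x, u). \<exists>lam. (\<forall>i. g (x, u, lam) $ i \<ge> 0) \<and> h (x, u, lam) = 0}"
    and V_poly: "poly_fun V"
    and sos: "sos_fun \<sigma>0" "sos_map \<sigma>1" "sos_map \<sigma>2" "sos_fun s0" "sos_map s1"
    and polys: "poly_map p1" "poly_map p2" "poly_map p3" "poly_map q1"
    and decrease: "\<And>x u lam x' u' lam'.
      V (x, u, lam) - V (x', u', lam') - (norm x)\<^sup>2 =
        \<sigma>0 ((x, u, lam), (x', u', lam'))
        + \<sigma>1 ((x, u, lam), (x', u', lam')) \<bullet> g (x, u, lam)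
        + \<sigma>2 ((x, u, lam), (x', u', lam')) \<bullet> g (x', u', lam')
        + p1 ((x, u, lam), (x', u', lam')) \<bullet> h (x, u, lam)
        + p2 ((x, u, lam), (x', u', lam')) \<bullet> h (x', u', lam')
        + p3 ((x, u, lam), (x', u', lam')) \<bullet> (x' - f (x, u))"
    and nonneg: "\<And>x u lam.
      V (x, u, lam) = s0 (x, u, lam) + s1 (x, u, lam) \<bullet> g (x, u, lam)
        + q1 (x, u, lam) \<bullet> h (x, u, lam)"
  shows "(\<forall>x0. cl_traj f psi x0 \<longlonglongrightarrow> 0) \<and>
    (((\<exists>r>0. \<exists>B. \<forall>x. norm x < r \<longrightarrow>
         \<bar>Inf {norm u + norm lam | u lam. (\<forall>i. g (x, u, lam) $ i \<ge> 0) \<and> h (x, u, lam) = 0}\<bar> \<le> B)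
      \<or> (\<forall>x u lam u' lam'. V (x, u, lam) = V (x, u', lam')))
     \<longrightarrow> GAS (cl_traj f psi))"
proof -
  define feas where "feas z \<longleftrightarrow> (\<forall>i. g z $ i \<ge> 0) \<and> h z = 0" for z
  define F where "F x = f (x, psi x)" for x
  have trajS: "cl_traj f psi x0 (Suc k) = F (cl_traj f psi x0 k)" for x0 k
    unfolding cl_traj_def F_def by simp
  have traj0: "cl_traj f psi x0 0 = x0" for x0 unfolding cl_traj_def by simp
  have feasI: "\<exists>lam. feas (x, psi x, lam)" for x
  proof -
    have "(x, psi x) \<in> {(x, psi x) | x. True}" by blast
    then have "(x, psi x) \<in> {(x, u). \<exists>lam. (\<forall>i. g (x, u, lam) $ i \<ge> 0) \<and> h (x, u, lam) = 0}"
      unfolding graph .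
    then show ?thesis unfolding feas_def by simp
  qed
  have feasD: "u = psi x" if "feas (x, u, lam)" for x u lam
  proof -
    have "(x, u) \<in> {(x, u). \<exists>lam. (\<forall>i. g (x, u, lam) $ i \<ge> 0) \<and> h (x, u, lam) = 0}"
      using that unfolding feas_def by blast
    then have "(x, u) \<in> {(x, psi x) | x. True}" unfolding graph .
    then show ?thesis by auto
  qed
  have Vnn: "V z \<ge> 0" if "feas z" for z
  proof -
    obtain x u lam where z: "z = (x,u,lam)" by (cases z) auto
    have "s0 (x,u,lam) \<ge> 0" by (rule sos_fun_nonneg[OF sos(4)])
    moreover have "s1 (x,u,lam) \<bullet> g (x,u,lam) \<ge> 0"
      using that z unfolding feas_def by (intro inner_nonneg_vec sos_map_nonneg[OF sos(5)]) auto
    moreover have "h (x,u,lam) = 0" using that z feas_def by simp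
    ultimately show ?thesis using nonneg[of x u lam] z by simp
  qed
  have dec: "V (x, psi x, lam) - V (F x, psi (F x), lam') \<ge> (norm x)\<^sup>2"
    if "feas (x, psi x, lam)" "feas (F x, psi (F x), lam')" for x lam lam'
  proof -
    let ?a = "(x, psi x, lam)" and ?b = "(F x, psi (F x), lam')"
    have "\<sigma>0 (?a, ?b) \<ge> 0" by (rule sos_fun_nonneg[OF sos(1)])
    moreover have "\<sigma>1 (?a, ?b) \<bullet> g ?a \<ge> 0"
      using that(1) unfolding feas_def by (intro inner_nonneg_vec sos_map_nonneg[OF sos(2)]) auto
    moreover have "\<sigma>2 (?a, ?b) \<bullet> g ?b \<ge> 0"
      using that(2) unfolding feas_def by (intro inner_nonneg_vec sos_map_nonneg[OF sos(3)]) auto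
    moreover have "h ?a = 0" "h ?b = 0" using that feas_def by auto
    moreover have "F x - f (x, psi x) = 0" by (simp add: F_def)
    ultimately show ?thesis using decrease[of x "psi x" lam "F x" "psi (F x)" lam'] by simp
  qed
  define lamf where "lamf x = (SOME lam. feas (x, psi x, lam))" for x
  have lamf: "feas (x, psi x, lamf x)" for x
    using feasI[of x] unfolding lamf_def by (rule someI_ex)
  have chain: "V (x0, psi x0, Lam 0) - V (cl_traj f psi x0 K, psi (cl_traj f psi x0 K), Lam K)
      \<ge> (norm (cl_traj f psi x0 j))\<^sup>2"
    if "\<And>k. feas (cl_traj f psi x0 k, psi (cl_traj f psi x0 k), Lam k)" "j < K" for x0 Lam j K
  proof -
    let ?xs = "cl_traj f psi x0"
    let ?W = "\<lambda>k. V (?xs k, psi (?xs k), Lam k)"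
    have "?W 0 - ?W K \<ge> (norm (?xs j))\<^sup>2"
    proof (rule chain_bound_single[OF _ that(2)])
      fix k show "?W k - ?W (Suc k) \<ge> (norm (?xs k))\<^sup>2"
        using dec[of "?xs k" "Lam k" "Lam (Suc k)"] that(1)[of k] that(1)[of "Suc k"]
        by (simp add: trajS)
    qed
    then show ?thesis by (simp add: traj0)
  qed
  have chainsum: "V (x0, psi x0, lamf x0) \<ge> (\<Sum>k<K. (norm (cl_traj f psi x0 k))\<^sup>2)" for x0 K
  proof -
    let ?xs = "cl_traj f psi x0"
    let ?W = "\<lambda>k. V (?xs k, psi (?xs k), lamf (?xs k))"
    have "?W 0 - ?W K \<ge> (\<Sum>k<K. (norm (?xs k))\<^sup>2)"
    proof (rule chain_bound)
      fix k show "?W k - ?W (Suc k) \<ge> (norm (?xs k))\<^sup>2"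
        using dec[of "?xs k" "lamf (?xs k)" "lamf (?xs (Suc k))"] lamf by (simp add: trajS)
    qed
    moreover have "?W K \<ge> 0" using Vnn lamf by blast
    ultimately show ?thesis by (simp add: traj0)
  qed
  have attr: "cl_traj f psi x0 \<longlonglongrightarrow> 0" for x0
  proof -
    let ?xs = "cl_traj f psi x0"
    have "summable (\<lambda>k. (norm (?xs k))\<^sup>2)"
      by (rule summableI_nonneg_bounded[where x="V (x0, psi x0, lamf x0)"]) (use chainsum in auto)
    then have "(\<lambda>k. (norm (?xs k))\<^sup>2) \<longlonglongrightarrow> 0" by (rule summable_LIMSEQ_zero)
    then have "(\<lambda>k. sqrt ((norm (?xs k))\<^sup>2)) \<longlonglongrightarrow> sqrt 0" by (rule tendsto_real_sqrt)
    then have "(\<lambda>k. norm (?xs k)) \<longlonglongrightarrow> 0" by simp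
    then show ?thesis by (simp add: tendsto_norm_zero_iff)
  qed
  have V_cont: "continuous_on UNIV V" by (rule poly_fun_cont[OF V_poly])
  have f_cont: "continuous_on UNIV f" by (rule poly_map_cont[OF f_poly])
  have g_cont: "continuous_on UNIV g" by (rule poly_map_cont[OF g_poly])
  have h_cont: "continuous_on UNIV h" by (rule poly_map_cont[OF h_poly])
  have closed_feas: "closed {z. feas z}"
  proof -
    have eq: "{z. feas z} = (\<Inter>i. {z. 0 \<le> g z $ i}) \<inter> {z. h z = 0}" unfolding feas_def by auto
    have "closed {z. 0 \<le> g z $ i}" for i
      by (rule closed_Collect_le) (auto intro!: continuous_intros g_cont)
    moreover have "closed {z. h z = 0}"
      by (rule closed_Collect_eq) (auto intro!: continuous_intros h_cont)
    ultimately show ?thesis unfolding eq by (intro closed_Int closed_INT) auto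
  qed
  show ?thesis
  proof (intro conjI impI allI attr)
    assume hyp: "(\<exists>r>0. \<exists>B. \<forall>x. norm x < r \<longrightarrow>
         \<bar>Inf {norm u + norm lam | u lam. (\<forall>i. g (x, u, lam) $ i \<ge> 0) \<and> h (x, u, lam) = 0}\<bar> \<le> B)
      \<or> (\<forall>x u lam u' lam'. V (x, u, lam) = V (x, u', lam'))"
    show "GAS (cl_traj f psi)"
      unfolding GAS_def
    proof (intro conjI allI attr impI)
      fix \<epsilon> :: real assume eps: "\<epsilon> > 0"
      show "\<exists>\<delta>>0. \<forall>x0. norm x0 \<le> \<delta> \<longrightarrow> (\<forall>k. norm (cl_traj f psi x0 k) \<le> \<epsilon>)"
        using hyp
      proof (elim disjE)
        assume B: "\<forall>x u lam u' lam'. V (x, u, lam) = V (x, u', lam')"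
        define W where "W x = V (x, 0, 0)" for x
        have VW: "V (x,u,lam) = W x" for x u lam unfolding W_def by (rule B[rule_format])
        have W_cont: "continuous_on UNIV W" unfolding W_def
          by (intro continuous_on_compose2[OF V_cont]) (auto intro!: continuous_intros)
        have W_at: "isCont W 0"
          using W_cont by (simp add: continuous_on_eq_continuous_at)
        have bound: "(norm (cl_traj f psi x0 j))\<^sup>2 \<le> W x0 - W 0" for x0 j
        proof -
          let ?xs = "cl_traj f psi x0"
          have "(\<lambda>K. W x0 - W (?xs K)) \<longlonglongrightarrow> W x0 - W 0"
            by (intro tendsto_intros isCont_tendsto_compose[OF W_at attr])
          moreover have "eventually (\<lambda>K. (norm (?xs j))\<^sup>2 \<le> W x0 - W (?xs K)) sequentially"
            using eventually_gt_at_top[of j]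
          proof eventually_elim
            case (elim K)
            have "V (?xs 0, psi (?xs 0), lamf (?xs 0)) - V (?xs K, psi (?xs K), lamf (?xs K)) \<ge> (norm (?xs j))\<^sup>2"
              using chain[of x0 "\<lambda>k. lamf (?xs k)" j K] lamf elim by (simp only: traj0)
            then show ?case by (simp only: VW traj0)
          qed
          ultimately show ?thesis by (intro tendsto_lowerbound) auto
        qed
        obtain d where d: "d > 0" "\<And>x. dist x 0 < d \<Longrightarrow> dist (W x) (W 0) < \<epsilon>\<^sup>2"
        proof -
          have "\<epsilon>\<^sup>2 > 0" using eps by simp
          then show ?thesis using W_at that unfolding continuous_at_eps_delta by blast
        qed
        show ?thesis
        proof (intro exI[of _ "d/2"] conjI allI impI)
          show "d/2 > 0" using d(1) by simp
          fix x0 :: "real^'n" and k assume x0: "norm x0 \<le> d/2"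
          have "dist (W x0) (W 0) < \<epsilon>\<^sup>2" by (rule d(2)) (use x0 d(1) in simp)
          then have "(norm (cl_traj f psi x0 k))\<^sup>2 \<le> \<epsilon>\<^sup>2"
            using bound[of x0 k] by (simp add: dist_real_def)
          then show "norm (cl_traj f psi x0 k) \<le> \<epsilon>"
            by (rule power2_le_imp_le) (use eps in auto)
        qed
      next
        assume A: "\<exists>r>0. \<exists>B. \<forall>x. norm x < r \<longrightarrow>
         \<bar>Inf {norm u + norm lam | u lam. (\<forall>i. g (x, u, lam) $ i \<ge> 0) \<and> h (x, u, lam) = 0}\<bar> \<le> B"
        then obtain r Bd where r: "r > 0" and Bd: "\<And>x. norm x < r \<Longrightarrow>
          \<bar>Inf {norm u + norm lam | u lam. (\<forall>i. g (x, u, lam) $ i \<ge> 0) \<and> h (x, u, lam) = 0}\<bar> \<le> Bd"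
          by blast
        have bnd: "\<exists>lam. feas (x, psi x, lam) \<and> norm (psi x) + norm lam \<le> Bd + 1"
          if "norm x < r" for x
        proof -
          let ?S = "{norm u + norm lam | u lam. (\<forall>i. g (x, u, lam) $ i \<ge> 0) \<and> h (x, u, lam) = 0}"
          have ne: "?S \<noteq> {}" using lamf[of x] unfolding feas_def by blast
          have lt: "Inf ?S < Bd + 1" using Bd[OF that] by linarith
          have "\<exists>s\<in>?S. s < Bd + 1" by (rule cInf_lessD[OF ne lt])
          then obtain u lam where ul: "feas (x,u,lam)" "norm u + norm lam < Bd+1"
            unfolding feas_def by blast
          have "u = psi x" using feasD[OF ul(1)] .
          then show ?thesis using ul by (intro exI[of _ lam]) auto
        qed
        define lb where "lb x = (SOME lam. feas (x, psi x, lam) \<and> norm (psi x) + norm lam \<le> Bd + 1)" for x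
        have lb: "feas (x, psi x, lb x) \<and> norm (psi x) + norm (lb x) \<le> Bd + 1" if "norm x < r" for x
          unfolding lb_def by (rule someI_ex) (rule bnd[OF that])
        define C where "C = {z. feas z \<and> norm (fst z) \<le> r/2 \<and> norm (fst (snd z)) + norm (snd (snd z)) \<le> Bd + 1}"
        have C_closed: "closed C"
        proof -
          have eq: "C = {z. feas z} \<inter> {z. norm (fst z) \<le> r/2} \<inter> {z. norm (fst (snd z)) + norm (snd (snd z)) \<le> Bd + 1}"
            unfolding C_def by auto
          show ?thesis unfolding eq
            by (intro closed_Int closed_feas closed_Collect_le) (auto intro!: continuous_intros)
        qed
        have C_bounded: "bounded C"
        proof -
          have "C \<subseteq> cball 0 (r/2 + (Bd + 1))"
          proof
            fix z assume "z \<in> C"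
            then have *: "norm (fst z) \<le> r/2" "norm (fst (snd z)) + norm (snd (snd z)) \<le> Bd + 1"
              unfolding C_def by auto
            have "norm z \<le> norm (fst z) + norm (snd z)"
              using norm_Pair_le[of "fst z" "snd z"] by simp
            moreover have "norm (snd z) \<le> norm (fst (snd z)) + norm (snd (snd z))"
              using norm_Pair_le[of "fst (snd z)" "snd (snd z)"] by simp
            ultimately show "z \<in> cball 0 (r/2 + (Bd + 1))" using * by simp
          qed
          then show ?thesis using bounded_cball bounded_subset by blast
        qed
        have C_comp: "compact C" using C_closed C_bounded compact_eq_bounded_closed by blast
        have F0: "F 0 = 0"
        proof -
          let ?ys = "cl_traj f psi 0"
          have "(\<lambda>k. norm (?ys k)) \<longlonglongrightarrow> 0" using attr[of 0] by (simp add: tendsto_norm_zero_iff)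
          then have "eventually (\<lambda>k. norm (?ys k) < r/2) sequentially"
            using r by (intro order_tendstoD(2)) auto
          then obtain N where N: "\<And>k. k \<ge> N \<Longrightarrow> norm (?ys k) < r/2"
            by (auto simp: eventually_sequentially)
          define zs where "zs k = (?ys (k+N), psi (?ys (k+N)), lb (?ys (k+N)))" for k
          have zsC: "zs k \<in> C" for k
          proof -
            have n: "norm (?ys (k+N)) < r/2" using N by simp
            then have "norm (?ys (k+N)) < r" using r by simp
            from lb[OF this] n show ?thesis unfolding zs_def C_def by auto
          qed
          obtain w \<phi> where w: "w \<in> C" "strict_mono \<phi>" "(zs \<circ> \<phi>) \<longlonglongrightarrow> w"
            using seq_compactE[OF compact_imp_seq_compact[OF C_comp], of zs] zsC by blast
          have t1: "(\<lambda>k. fst (zs (\<phi> k))) \<longlonglongrightarrow> fst w"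
            using tendsto_fst[OF w(3)] by (simp add: o_def)
          have "(\<lambda>k. ?ys (k + N)) \<longlonglongrightarrow> 0" by (rule LIMSEQ_ignore_initial_segment[OF attr])
          from LIMSEQ_subseq_LIMSEQ[OF this w(2)]
          have t2: "(\<lambda>k. fst (zs (\<phi> k))) \<longlonglongrightarrow> 0" by (simp add: o_def zs_def)
          have fw: "fst w = 0" using LIMSEQ_unique[OF t1 t2] .
          have "feas (fst w, fst (snd w), snd (snd w))" using w(1) unfolding C_def by simp
          then have "fst (snd w) = psi (fst w)" by (rule feasD)
          then have sw: "fst (snd w) = psi 0" using fw by simp
          have "(\<lambda>k. (fst (zs (\<phi> k)), fst (snd (zs (\<phi> k))))) \<longlonglongrightarrow> (fst w, fst (snd w))"
          proof -
            have t0: "(\<lambda>k. zs (\<phi> k)) \<longlonglongrightarrow> w" using w(3) unfolding comp_def .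
            show ?thesis by (intro tendsto_intros t0)
          qed
          moreover have "isCont f (fst w, fst (snd w))"
            using f_cont by (simp add: continuous_on_eq_continuous_at)
          ultimately have t3: "(\<lambda>k. f (fst (zs (\<phi> k)), fst (snd (zs (\<phi> k))))) \<longlonglongrightarrow> F 0"
            using isCont_tendsto_compose[of "(fst w, fst (snd w))" f] fw sw F_def by auto
          have "(\<lambda>k. ?ys (k + Suc N)) \<longlonglongrightarrow> 0" by (rule LIMSEQ_ignore_initial_segment[OF attr])
          from LIMSEQ_subseq_LIMSEQ[OF this w(2)]
          have t4: "(\<lambda>k. f (fst (zs (\<phi> k)), fst (snd (zs (\<phi> k))))) \<longlonglongrightarrow> 0"
            by (simp add: o_def zs_def trajS F_def)
          show ?thesis using LIMSEQ_unique[OF t3 t4] .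
        qed
        have Vconst: "V (0, psi 0, lam) = V (0, psi 0, lam')"
          if "feas (0, psi 0, lam)" "feas (0, psi 0, lam')" for lam lam'
          using dec[of 0 lam lam'] dec[of 0 lam' lam] that F0 by force
        define c where "c = V (0, psi 0, lamf 0)"
        have Vc: "V z = c" if "z \<in> C" "fst z = 0" for z
        proof -
          obtain x u lam where z: "z = (x,u,lam)" by (cases z) auto
          have "feas (0, u, lam)" using that z unfolding C_def by simp
          moreover then have "u = psi 0" using feasD by blast
          ultimately show ?thesis using Vconst[of lam "lamf 0"] lamf[of 0] z that(2) c_def by simp
        qed
        have near: "\<exists>d>0. \<forall>z\<in>C. norm (fst z) < d \<longrightarrow> \<bar>V z - c\<bar> < \<eta>" if "\<eta> > 0" for \<eta>
        proof -
          let ?K = "C \<inter> {z. \<eta> \<le> \<bar>V z - c\<bar>}"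
          have "closed {z. \<eta> \<le> \<bar>V z - c\<bar>}"
            by (rule closed_Collect_le) (auto intro!: continuous_intros V_cont)
          then have Kc: "compact ?K" using C_comp by blast
          show ?thesis
          proof (cases "?K = {}")
            case True then show ?thesis by (intro exI[of _ 1]) force
          next
            case False
            obtain z0 where z0: "z0 \<in> ?K" "\<And>y. y \<in> ?K \<Longrightarrow> norm (fst z0) \<le> norm (fst y)"
            proof -
              have "continuous_on ?K (\<lambda>z. norm (fst z))" by (intro continuous_intros)
              from continuous_attains_inf[OF Kc False this] show ?thesis using that by blast
            qed
            have "fst z0 \<noteq> 0"
            proof
              assume "fst z0 = 0"
              then have "V z0 = c" using z0(1) Vc by blast
              then show False using z0(1) that by simp
            qed
            then have pos: "norm (fst z0) > 0" by simp
            show ?thesis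
            proof (intro exI[of _ "norm (fst z0)"] conjI ballI impI)
              show "norm (fst z0) > 0" by (rule pos)
              fix z assume zC: "z \<in> C" and zn: "norm (fst z) < norm (fst z0)"
              show "\<bar>V z - c\<bar> < \<eta>"
              proof (rule ccontr)
                assume "\<not> \<bar>V z - c\<bar> < \<eta>"
                then have "z \<in> ?K" using zC by simp
                from z0(2)[OF this] zn show False by linarith
              qed
            qed
          qed
        qed
        obtain d where d: "d > 0" "\<And>z. z \<in> C \<Longrightarrow> norm (fst z) < d \<Longrightarrow> \<bar>V z - c\<bar> < \<epsilon>\<^sup>2/4"
          using near[of "\<epsilon>\<^sup>2/4"] eps by auto
        define d' where "d' = min d (r/2)"
        have d': "d' > 0" "d' \<le> d" "d' \<le> r/2" using d(1) r unfolding d'_def by auto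
        show ?thesis
        proof (intro exI[of _ "d'/2"] conjI allI impI)
          show "d'/2 > 0" using d' by simp
          fix x0 :: "real^'n" and k assume x0: "norm x0 \<le> d'/2"
          let ?xs = "cl_traj f psi x0"
          have x0r: "norm x0 < r" "norm x0 < d" "norm x0 \<le> r/2" using x0 d' by auto
          obtain lam0 where lam0: "feas (x0, psi x0, lam0)" "norm (psi x0) + norm lam0 \<le> Bd + 1"
            using bnd[OF x0r(1)] by auto
          have "(x0, psi x0, lam0) \<in> C" unfolding C_def using lam0 x0r by auto
          from d(2)[OF this] x0r have a0: "\<bar>V (x0, psi x0, lam0) - c\<bar> < \<epsilon>\<^sup>2/4" by simp
          then have V0: "V (x0, psi x0, lam0) < c + \<epsilon>\<^sup>2/4" unfolding abs_less_iff by linarith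
          have "(\<lambda>K. norm (?xs K)) \<longlonglongrightarrow> 0" using attr[of x0] by (simp add: tendsto_norm_zero_iff)
          then have "eventually (\<lambda>K. norm (?xs K) < d') sequentially"
            using d' by (intro order_tendstoD(2)) auto
          then obtain N where N: "\<And>K. K \<ge> N \<Longrightarrow> norm (?xs K) < d'"
            by (auto simp: eventually_sequentially)
          define K where "K = max N (Suc k)"
          have K: "k < K" "norm (?xs K) < d'" using N unfolding K_def by auto
          then have Kr: "norm (?xs K) < r" "norm (?xs K) < d" "norm (?xs K) \<le> r/2" using d' by auto
          obtain lamK where lamK: "feas (?xs K, psi (?xs K), lamK)" "norm (psi (?xs K)) + norm lamK \<le> Bd + 1"
            using bnd[OF Kr(1)] by auto
          have "(?xs K, psi (?xs K), lamK) \<in> C" unfolding C_def using lamK Kr by auto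
          from d(2)[OF this] Kr have aK: "\<bar>V (?xs K, psi (?xs K), lamK) - c\<bar> < \<epsilon>\<^sup>2/4" by simp
          then have VK: "V (?xs K, psi (?xs K), lamK) > c - \<epsilon>\<^sup>2/4" unfolding abs_less_iff by linarith
          define Lam where "Lam j = (if j = 0 then lam0 else if j = K then lamK else lamf (?xs j))" for j
          have "feas (?xs j, psi (?xs j), Lam j)" for j
            using lam0 lamK lamf K unfolding Lam_def by (auto simp: traj0)
          from chain[of x0 Lam k K, OF this K(1)]
          have "(norm (?xs k))\<^sup>2 \<le> V (x0, psi x0, lam0) - V (?xs K, psi (?xs K), lamK)"
            using K unfolding Lam_def by simp
          also have "\<dots> < \<epsilon>\<^sup>2"
          proof -
            have "\<epsilon>\<^sup>2 > 0" using eps by simp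
            then show ?thesis using V0 VK by linarith
          qed
          finally show "norm (?xs k) \<le> \<epsilon>"
            by (rule power2_le_imp_le[OF less_imp_le]) (use eps in auto)
        qed
      qed
    qed
  qed
qed

end
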